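(* Let $\Theta$ be a subset of a Polish space with metric $d$, equipped with its Borel $\sigma$-algebra, let $\nu$ be a probability measure on $\Theta$, and let $\{P^\theta:\theta\in\Theta\}$ be probability measures on $(\Omega,\mathcal{F})$ such that $\theta\mapsto P^\theta(A)$ is Borel measurable for each $A\in\mathcal{F}$ and $\theta\mapsto P^\theta$ is continuous in total variation (for every $\theta$ and $\varepsilon>0$ there is $\delta>0$ with $\sup_{A\in\mathcal{F}}|P^\theta(A)-P^{\theta'}(A)|<\varepsilon$ whenever $d(\theta,\theta')<\delta$). Let $\mathbb{P}(A)=\int_\Theta P^\theta(A)\,\nu(\mathrm{d}\theta)$ be the mixture probability measure. Then there exists a Borel set $\Theta^1\subseteq\Theta$ with $\nu(\Theta^1)=1$ such that $P^\theta\ll\mathbb{P}$ for all $\theta\in\Theta^1$. Moreover, letting $c\mathcal{M}^1$ be the set of all countable convex combinations of measures in $\{P^\theta:\theta\in\Theta^1\}$, for every monetary risk measure $\rho$ and every penalty function $\alpha:\mathcal{M}_1\to\mathbb{R}\cup\{+\infty\}$ and all $X\in L^\infty(\mathbb{P})$, $$\sup_{P\in c\mathcal{M}^1}\widehat\rho^P(X)=\widehat\rho^{\mathbb{P}}(X)\quad\text{and}\quad\sup_{P\in c\mathcal{M}^1}\rho^P(X)=\rho^{\mathbb{P}}(X).$$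
   Context: $(\Omega,\mathcal{F})$ is a measurable space, $\mathcal{M}_1$ the set of probability measures on it, $\mathcal{X}$ the space of pointwise bounded $\mathcal{F}$-measurable real functions. A monetary risk measure is $\rho:\mathcal{X}\to\mathbb{R}$ with, pointwise: $X\ge0\Rightarrow\rho(X)\le0$; $X\ge Y\Rightarrow\rho(X)\le\rho(Y)$; $\rho(X+a)=\rho(X)-a$. For $P\in\mathcal{M}_1$ and $X\in L^\infty(P)=L^\infty(\Omega,\mathcal{F},P)$: $\rho^P(X)=\inf\{\rho(\widetilde X):\widetilde X\in\mathcal{X},P(\widetilde X=X)=1\}$, and $\widehat\rho^P(X)=\sup_{Q\in\mathcal{M}_1,Q\ll P}\{\mathbb{E}_Q[-X]-\alpha(Q)\}$. *)

theory Defs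
  imports "HOL-Probability.Probability"
begin

text \<open>The measurable space (Omega, F) is represented by a measure M (only space M and sets M
are used). The space X of pointwise bounded F-measurable real functions.\<close>
definition bdd_meas :: "'a measure \<Rightarrow> ('a \<Rightarrow> real) set" where
  "bdd_meas M = {X. X \<in> borel_measurable M \<and> (\<exists>C. \<forall>\<omega>\<in>space M. \<bar>X \<omega>\<bar> \<le> C)}"

definition prob_measures :: "'a measure \<Rightarrow> 'a measure set" where
  "prob_measures M = {Q. sets Q = sets M \<and> prob_space Q}"

definition monetary_risk_measure :: "'a measure \<Rightarrow> (('a \<Rightarrow> real) \<Rightarrow> real) \<Rightarrow> bool" where
  "monetary_risk_measure M \<rho> \<longleftrightarrow>
     (\<forall>X\<in>bdd_meas M. (\<forall>\<omega>\<in>space M. X \<omega> \<ge> 0) \<longrightarrow> \<rho> X \<le> 0) \<and>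
     (\<forall>X\<in>bdd_meas M. \<forall>Y\<in>bdd_meas M. (\<forall>\<omega>\<in>space M. X \<omega> \<ge> Y \<omega>) \<longrightarrow> \<rho> X \<le> \<rho> Y) \<and>
     (\<forall>X\<in>bdd_meas M. \<forall>a::real. \<rho> (\<lambda>\<omega>. X \<omega> + a) = \<rho> X - a)"

text \<open>Representatives of elements of L-infinity(P): measurable, P-essentially bounded.\<close>
definition Linf :: "'a measure \<Rightarrow> 'a measure \<Rightarrow> ('a \<Rightarrow> real) set" where
  "Linf M P = {X. X \<in> borel_measurable M \<and> (\<exists>C. AE \<omega> in P. \<bar>X \<omega>\<bar> \<le> C)}"

definition rho_P :: "'a measure \<Rightarrow> (('a \<Rightarrow> real) \<Rightarrow> real) \<Rightarrow> 'a measure \<Rightarrow> ('a \<Rightarrow> real) \<Rightarrow> ereal" where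
  "rho_P M \<rho> P X = (INF Y\<in>{Y\<in>bdd_meas M. AE \<omega> in P. Y \<omega> = X \<omega>}. ereal (\<rho> Y))"

definition rho_hat :: "'a measure \<Rightarrow> ('a measure \<Rightarrow> ereal) \<Rightarrow> 'a measure \<Rightarrow> ('a \<Rightarrow> real) \<Rightarrow> ereal" where
  "rho_hat M \<alpha> P X =
     (SUP Q\<in>{Q\<in>prob_measures M. absolutely_continuous P Q}. ereal (\<integral>\<omega>. - X \<omega> \<partial>Q) - \<alpha> Q)"

definition mixture :: "'a measure \<Rightarrow> ('t \<Rightarrow> 'a measure) \<Rightarrow> 't measure \<Rightarrow> 'a measure" where
  "mixture M P \<nu> = measure_of (space M) (sets M) (\<lambda>A. \<integral>\<^sup>+ \<theta>. emeasure (P \<theta>) A \<partial>\<nu>)"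

definition ccomb :: "'a measure \<Rightarrow> ('t \<Rightarrow> 'a measure) \<Rightarrow> 't set \<Rightarrow> 'a measure set" where
  "ccomb M P T = {Q. sets Q = sets M \<and>
     (\<exists>(w::nat \<Rightarrow> real) (th::nat \<Rightarrow> 't). (\<forall>n. w n \<ge> 0) \<and> w sums 1 \<and> (\<forall>n. th n \<in> T) \<and>
        (\<forall>A\<in>sets M. emeasure Q A = (\<Sum>n. ennreal (w n) * emeasure (P (th n)) A)))}"

end

theory Submission
  imports Defs
begin

lemma mixture_facts:
  assumes nu_sets: "sets \<nu> = sets (restrict_space borel \<Theta>)"
    and P_prob: "\<forall>\<theta>\<in>\<Theta>. P \<theta> \<in> prob_measures M"
    and P_meas: "\<forall>A\<in>sets M. (\<lambda>\<theta>. measure (P \<theta>) A) \<in> borel_measurable \<nu>"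
  shows "space \<nu> = \<Theta>"
    and "\<And>A. A \<in> sets M \<Longrightarrow> (\<lambda>\<theta>. emeasure (P \<theta>) A) \<in> borel_measurable \<nu>"
    and "sets (mixture M P \<nu>) = sets M"
    and "\<And>A. A \<in> sets M \<Longrightarrow> emeasure (mixture M P \<nu>) A = (\<integral>\<^sup>+\<theta>. emeasure (P \<theta>) A \<partial>\<nu>)"
proof -
  show sp: "space \<nu> = \<Theta>"
    using sets_eq_imp_space_eq[OF nu_sets] by (simp add: space_restrict_space)
  show em: "(\<lambda>\<theta>. emeasure (P \<theta>) A) \<in> borel_measurable \<nu>" if "A \<in> sets M" for A
  proof -
    have "(\<lambda>\<theta>. ennreal (measure (P \<theta>) A)) \<in> borel_measurable \<nu>"
      using P_meas that by auto
    then show ?thesis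
      by (rule measurable_cong[THEN iffD1, rotated])
        (use P_prob sp in \<open>auto simp: prob_measures_def prob_space_def finite_measure.emeasure_eq_measure\<close>)
  qed
  show "sets (mixture M P \<nu>) = sets M"
    unfolding mixture_def by (simp add: sets_measure_of_conv sets.space_closed sets.sigma_sets_eq)
  fix A assume A: "A \<in> sets M"
  show "emeasure (mixture M P \<nu>) A = (\<integral>\<^sup>+\<theta>. emeasure (P \<theta>) A \<partial>\<nu>)"
    unfolding mixture_def
  proof (rule emeasure_measure_of_sigma)
    show "sigma_algebra (space M) (sets M)" by (rule sets.sigma_algebra_axioms)
    show "positive (sets M) (\<lambda>A. \<integral>\<^sup>+ \<theta>. emeasure (P \<theta>) A \<partial>\<nu>)"
      by (simp add: positive_def)
    show "countably_additive (sets M) (\<lambda>A. \<integral>\<^sup>+ \<theta>. emeasure (P \<theta>) A \<partial>\<nu>)"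
      unfolding countably_additive_def
    proof (intro allI impI)
      fix F :: "nat \<Rightarrow> _" assume F: "range F \<subseteq> sets M" "disjoint_family F"
      have "(\<Sum>i. \<integral>\<^sup>+ \<theta>. emeasure (P \<theta>) (F i) \<partial>\<nu>) = \<integral>\<^sup>+ \<theta>. (\<Sum>i. emeasure (P \<theta>) (F i)) \<partial>\<nu>"
        by (rule nn_integral_suminf[symmetric]) (use F em in auto)
      also have "\<dots> = \<integral>\<^sup>+ \<theta>. emeasure (P \<theta>) (\<Union>i. F i) \<partial>\<nu>"
        by (rule nn_integral_cong, rule suminf_emeasure)
          (use F P_prob sp in \<open>auto simp: prob_measures_def\<close>)
      finally show "(\<Sum>i. \<integral>\<^sup>+ \<theta>. emeasure (P \<theta>) (F i) \<partial>\<nu>) = \<integral>\<^sup>+ \<theta>. emeasure (P \<theta>) (\<Union>(range F)) \<partial>\<nu>" .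
    qed
  qed fact
qed


lemma rho_hat_mono:
  assumes "absolutely_continuous R Q"
  shows "rho_hat M \<alpha> Q X \<le> rho_hat M \<alpha> R X"
  unfolding rho_hat_def
  by (rule SUP_subset_mono) (use assms in \<open>auto simp: absolutely_continuous_def\<close>)

lemma rho_P_mono:
  assumes "sets Q = sets R" "absolutely_continuous R Q"
  shows "rho_P M \<rho> Q X \<le> rho_P M \<rho> R X"
  unfolding rho_P_def
  by (rule INF_superset_mono) (use assms absolutely_continuous_AE in auto)

theorem theorem6p10:
  fixes M :: "'a measure"
    and \<Theta> :: "'t::polish_space set"
    and \<nu> :: "'t measure"
    and P :: "'t \<Rightarrow> 'a measure"
  assumes nu_sets: "sets \<nu> = sets (restrict_space borel \<Theta>)"
    and nu_prob: "prob_space \<nu>"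
    and P_prob: "\<forall>\<theta>\<in>\<Theta>. P \<theta> \<in> prob_measures M"
    and P_meas: "\<forall>A\<in>sets M. (\<lambda>\<theta>. measure (P \<theta>) A) \<in> borel_measurable \<nu>"
    and P_tv_cont: "\<forall>\<theta>\<in>\<Theta>. \<forall>\<epsilon>>0. \<exists>\<delta>>0. \<forall>\<theta>'\<in>\<Theta>. dist \<theta> \<theta>' < \<delta> \<longrightarrow>
         (SUP A\<in>sets M. \<bar>measure (P \<theta>) A - measure (P \<theta>') A\<bar>) < \<epsilon>"
  shows "\<exists>\<Theta>1. \<Theta>1 \<in> sets \<nu> \<and> emeasure \<nu> \<Theta>1 = 1 \<and>
           (\<forall>\<theta>\<in>\<Theta>1. absolutely_continuous (mixture M P \<nu>) (P \<theta>)) \<and>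
           (\<forall>\<rho> \<alpha> X. monetary_risk_measure M \<rho> \<longrightarrow>
              (\<forall>Q\<in>prob_measures M. \<alpha> Q \<noteq> -\<infinity>) \<longrightarrow>
              X \<in> Linf M (mixture M P \<nu>) \<longrightarrow>
              (SUP Q\<in>ccomb M P \<Theta>1. rho_hat M \<alpha> Q X) = rho_hat M \<alpha> (mixture M P \<nu>) X \<and>
              (SUP Q\<in>ccomb M P \<Theta>1. rho_P M \<rho> Q X) = rho_P M \<rho> (mixture M P \<nu>) X)"
proof -
  note mf = mixture_facts[OF nu_sets P_prob P_meas]
  have sp: "space \<nu> = \<Theta>" by (rule mf(1))
  interpret nu: prob_space \<nu> by (rule nu_prob)
  define mix where "mix = mixture M P \<nu>"
  have mix_sets: "sets mix = sets M" using mf(3) mix_def by simp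
  have mix_em: "\<And>A. A \<in> sets M \<Longrightarrow> emeasure mix A = (\<integral>\<^sup>+\<theta>. emeasure (P \<theta>) A \<partial>\<nu>)"
    using mf(4) mix_def by simp
  have Psets: "\<And>\<theta>. \<theta>\<in>\<Theta> \<Longrightarrow> sets (P \<theta>) = sets M"
    and Pprob: "\<And>\<theta>. \<theta>\<in>\<Theta> \<Longrightarrow> prob_space (P \<theta>)"
    using P_prob by (auto simp: prob_measures_def)
  have emm: "\<And>\<theta> A. \<theta>\<in>\<Theta> \<Longrightarrow> emeasure (P \<theta>) A = ennreal (measure (P \<theta>) A)"
    using Pprob by (simp add: prob_space_def finite_measure.emeasure_eq_measure)
  have tv: "\<bar>measure (P \<theta>) A - measure (P \<theta>') A\<bar> \<le> (SUP A\<in>sets M. \<bar>measure (P \<theta>) A - measure (P \<theta>') A\<bar>)"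
    if tvh: "\<theta>\<in>\<Theta>" "\<theta>'\<in>\<Theta>" "A\<in>sets M" for \<theta> \<theta>' A
  proof (rule cSUP_upper[OF tvh(3)])
    have "\<bar>measure (P \<theta>) B - measure (P \<theta>') B\<bar> \<le> 1" for B
      using prob_space.prob_le_1[OF Pprob[OF tvh(1)], of B] prob_space.prob_le_1[OF Pprob[OF tvh(2)], of B]
        measure_nonneg[of "P \<theta>" B] measure_nonneg[of "P \<theta>'" B] by linarith
    then show "bdd_above ((\<lambda>A. \<bar>measure (P \<theta>) A - measure (P \<theta>') A\<bar>) ` sets M)"
      by (intro bdd_aboveI2) auto
  qed
  obtain B :: "'t set set" where B: "countable B" "topological_basis B"
    using ex_countable_basis by blast
  have Bopen: "\<And>b. b\<in>B \<Longrightarrow> open b" using B(2) topological_basis_open by blast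
  define N where "N = {b\<in>B. emeasure \<nu> (b \<inter> \<Theta>) = 0}"
  define \<Theta>1 where "\<Theta>1 = \<Theta> - \<Union>N"
  have bsets: "\<And>U. open U \<Longrightarrow> U \<inter> \<Theta> \<in> sets \<nu>"
    unfolding nu_sets sets_restrict_space by auto
  have T1sets: "\<Theta>1 \<in> sets \<nu>"
  proof -
    have "open (\<Union>N)" using Bopen N_def by auto
    then have "closed (- \<Union>N)" by auto
    then have "\<Theta> \<inter> (- \<Union>N) \<in> sets (restrict_space borel \<Theta>)"
      unfolding sets_restrict_space by auto
    moreover have "\<Theta>1 = \<Theta> \<inter> (- \<Union>N)" unfolding \<Theta>1_def by auto
    ultimately show ?thesis using nu_sets by simp
  qed
  have null: "(\<Union>b\<in>N. b \<inter> \<Theta>) \<in> null_sets \<nu>"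
    by (rule null_sets_UN') (use B Bopen bsets in \<open>auto simp: N_def intro: countable_subset\<close>)
  have aeT1: "AE x in \<nu>. x \<in> \<Theta>1"
    unfolding eventually_ae_filter
    by (rule bexI[OF _ null]) (auto simp: sp \<Theta>1_def)
  have T1_1: "emeasure \<nu> \<Theta>1 = 1"
    by (rule nu.emeasure_eq_1_AE[OF T1sets aeT1])
  have T1sub: "\<Theta>1 \<subseteq> \<Theta>" unfolding \<Theta>1_def by auto
  have pos: "emeasure \<nu> (U \<inter> \<Theta>) \<noteq> 0" if ph: "\<theta>\<in>\<Theta>1" "open U" "\<theta>\<in>U" for \<theta> U
  proof -
    obtain b where b: "b\<in>B" "\<theta>\<in>b" "b\<subseteq>U" using topological_basisE[OF B(2) ph(2,3)] by blast
    then have "b \<notin> N" using ph(1) unfolding \<Theta>1_def by auto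
    then have "emeasure \<nu> (b \<inter> \<Theta>) \<noteq> 0" using b(1) N_def by auto
    moreover have "emeasure \<nu> (b \<inter> \<Theta>) \<le> emeasure \<nu> (U \<inter> \<Theta>)"
      by (rule emeasure_mono) (use b bsets ph in auto)
    ultimately show ?thesis by auto
  qed
  have ac: "emeasure (P \<theta>) A = 0" if ah: "\<theta>\<in>\<Theta>1" "A\<in>sets M" "emeasure mix A = 0" for \<theta> A
  proof (rule ccontr)
    assume "emeasure (P \<theta>) A \<noteq> 0"
    then have e: "measure (P \<theta>) A > 0" using emm[of \<theta> A] ah T1sub measure_nonneg[of "P \<theta>" A]
      by (auto simp: less_le)
    obtain \<delta> where d: "\<delta>>0" and hd: "\<forall>\<theta>'\<in>\<Theta>. dist \<theta> \<theta>' < \<delta> \<longrightarrow>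
         (SUP A\<in>sets M. \<bar>measure (P \<theta>) A - measure (P \<theta>') A\<bar>) < measure (P \<theta>) A"
    proof -
      have "\<theta> \<in> \<Theta>" using ah(1) T1sub by auto
      then show ?thesis using P_tv_cont e that by metis
    qed
    have "AE \<theta>' in \<nu>. emeasure (P \<theta>') A = 0"
      using nn_integral_0_iff_AE[OF mf(2)[OF ah(2)]] mix_em[OF ah(2)] ah(3) by simp
    then obtain N' where N': "N' \<in> null_sets \<nu>" "{x\<in>space \<nu>. emeasure (P x) A \<noteq> 0} \<subseteq> N'"
      unfolding eventually_ae_filter by blast
    have "ball \<theta> \<delta> \<inter> \<Theta> \<subseteq> N'"
    proof
      fix x assume x: "x \<in> ball \<theta> \<delta> \<inter> \<Theta>"
      then have xT: "x \<in> \<Theta>" "dist \<theta> x < \<delta>" by auto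
      have "\<theta> \<in> \<Theta>" using ah(1) T1sub by auto
      then have "\<bar>measure (P \<theta>) A - measure (P x) A\<bar> < measure (P \<theta>) A"
        using tv[of \<theta> x A] hd xT ah(2) by fastforce
      then have "measure (P x) A \<noteq> 0" by auto
      then have "emeasure (P x) A \<noteq> 0" using emm[of x A] x by auto
      then show "x \<in> N'" using N'(2) x sp by auto
    qed
    then have "ball \<theta> \<delta> \<inter> \<Theta> \<in> null_sets \<nu>"
      using null_sets_subset[OF N'(1) bsets] by auto
    then show False using pos[of \<theta> "ball \<theta> \<delta>"] ah(1) d by auto
  qed
  define D where "D = (\<lambda>b. SOME x. x \<in> b \<inter> \<Theta>1) ` {b\<in>B. b \<inter> \<Theta>1 \<noteq> {}}"
  have some_in: "\<And>b. b \<inter> \<Theta>1 \<noteq> {} \<Longrightarrow> (SOME x. x \<in> b \<inter> \<Theta>1) \<in> b \<inter> \<Theta>1"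
    by (rule some_in_eq[THEN iffD2])
  have Dsub: "D \<subseteq> \<Theta>1"
    unfolding D_def using some_in by blast
  have Dcount: "countable D" unfolding D_def using B(1) by auto
  have Ddense: "\<exists>d\<in>D. dist \<theta> d < \<delta>" if dh: "\<theta>\<in>\<Theta>1" "\<delta>>0" for \<theta> \<delta>
  proof -
    obtain b where b: "b\<in>B" "\<theta>\<in>b" "b\<subseteq>ball \<theta> \<delta>"
      using topological_basisE[OF B(2), of "ball \<theta> \<delta>" \<theta>] dh by auto
    then have ne: "b \<inter> \<Theta>1 \<noteq> {}" using dh by auto
    have "(SOME x. x \<in> b \<inter> \<Theta>1) \<in> b \<inter> \<Theta>1" using ne by (rule some_in)
    moreover have "(SOME x. x \<in> b \<inter> \<Theta>1) \<in> D" unfolding D_def using b ne by auto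
    ultimately show ?thesis using b by (metis IntD1 mem_ball subsetD)
  qed
  have "\<Theta>1 \<noteq> {}" using T1_1 by auto
  then have Dne: "D \<noteq> {}" using Ddense[of _ 1] by fastforce
  define th where "th = from_nat_into D"
  have th_in: "\<And>n. th n \<in> \<Theta>1" using from_nat_into[OF Dne] Dsub th_def by auto
  have thdense: "\<exists>n. dist \<theta> (th n) < \<delta>" if "\<theta>\<in>\<Theta>1" "\<delta>>0" for \<theta> \<delta>
    using Ddense[OF that] range_from_nat_into[OF Dne Dcount] unfolding th_def by (metis imageE)
  define G where "G = geometric_pmf (1/2::real)"
  define w where "w = (\<lambda>n::nat. (1 - 1/2::real)^n * (1/2))"
  have pmfG: "\<And>n. pmf G n = w n" unfolding G_def w_def by (rule pmf_geometric) auto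
  have wpos: "\<And>n. w n > 0" unfolding w_def by simp
  have wsums: "w sums 1"
  proof -
    have "(\<lambda>n. (1/2::real)^n * (1/2)) sums (1 / (1 - 1/2) * (1/2))"
      by (intro sums_mult2 geometric_sums) auto
    then show ?thesis unfolding w_def by simp
  qed
  define Q0 where "Q0 = bind (measure_pmf G) (\<lambda>n. P (th n))"
  have kmeas: "(\<lambda>n. P (th n)) \<in> measurable (measure_pmf G) (subprob_algebra M)"
  proof (rule measurable_subprob_algebra)
    have thT: "\<And>n. th n \<in> \<Theta>" using th_in T1sub by auto
    fix a show "subprob_space (P (th a))" using Pprob[OF thT] prob_space_imp_subprob_space by blast
    show "sets (P (th a)) = sets M" using Psets[OF thT] by blast
  qed auto
  have Q0sets: "sets Q0 = sets M"
    unfolding Q0_def by (rule sets_bind) (use th_in T1sub Psets in auto)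
  have Q0em: "emeasure Q0 A = (\<Sum>n. ennreal (w n) * emeasure (P (th n)) A)" if "A\<in>sets M" for A
    unfolding Q0_def
    by (simp add: emeasure_bind[OF _ kmeas that] nn_integral_measure_pmf nn_integral_count_space_nat pmfG)
  have Q0cc: "Q0 \<in> ccomb M P \<Theta>1"
  proof -
    have "(\<forall>n. w n \<ge> 0) \<and> w sums 1 \<and> (\<forall>n. th n \<in> \<Theta>1) \<and>
        (\<forall>A\<in>sets M. emeasure Q0 A = (\<Sum>n. ennreal (w n) * emeasure (P (th n)) A))"
      using Q0em wpos wsums th_in less_imp_le by blast
    then show ?thesis unfolding ccomb_def using Q0sets by blast
  qed
  have cc_ac: "absolutely_continuous mix Q" if ch: "Q \<in> ccomb M P \<Theta>1" for Q
  proof -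
    obtain v t where Qs: "sets Q = sets M" and v: "\<forall>n. t n \<in> \<Theta>1"
      and em: "\<forall>A\<in>sets M. emeasure Q A = (\<Sum>n. ennreal (v n) * emeasure (P (t n)) A)"
      using ch unfolding ccomb_def by blast
    show ?thesis unfolding absolutely_continuous_def
    proof
      fix A assume "A \<in> null_sets mix"
      then have A: "A \<in> sets M" "emeasure mix A = 0" using mix_sets by auto
      then have "emeasure Q A = 0" using em ac[OF _ A] v by simp
      then show "A \<in> null_sets Q" using A Qs by auto
    qed
  qed
  have Q0_ac: "absolutely_continuous Q0 mix"
    unfolding absolutely_continuous_def
  proof
    fix A assume "A \<in> null_sets Q0"
    then have A: "A \<in> sets M" "emeasure Q0 A = 0" using Q0sets by auto
    then have "(\<Sum>n. ennreal (w n) * emeasure (P (th n)) A) = 0" using Q0em by simp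
    then have "\<forall>n. ennreal (w n) * emeasure (P (th n)) A = 0"
      by (subst (asm) suminf_eq_zero_iff) auto
    then have z: "\<And>n. emeasure (P (th n)) A = 0" using wpos by (metis ennreal_eq_0_iff less_le_not_le mult_eq_0_iff)
    have zz: "emeasure (P \<theta>) A = 0" if zh: "\<theta> \<in> \<Theta>1" for \<theta>
    proof (rule ccontr)
      assume "emeasure (P \<theta>) A \<noteq> 0"
      then have e: "measure (P \<theta>) A > 0" using emm[of \<theta> A] zh T1sub measure_nonneg[of "P \<theta>" A]
        by (auto simp: less_le)
      obtain \<delta> where d: "\<delta>>0" and hd: "\<forall>\<theta>'\<in>\<Theta>. dist \<theta> \<theta>' < \<delta> \<longrightarrow>
           (SUP A\<in>sets M. \<bar>measure (P \<theta>) A - measure (P \<theta>') A\<bar>) < measure (P \<theta>) A"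
      proof -
        have "\<theta> \<in> \<Theta>" using zh T1sub by auto
        then show ?thesis using P_tv_cont e that by metis
      qed
      obtain n where n: "dist \<theta> (th n) < \<delta>" using thdense[OF zh d] by blast
      have "\<bar>measure (P \<theta>) A - measure (P (th n)) A\<bar> < measure (P \<theta>) A"
      proof -
        have "\<theta> \<in> \<Theta>" "th n \<in> \<Theta>" using zh T1sub th_in by auto
        then show ?thesis using tv[of \<theta> "th n" A] hd n A(1) by fastforce
      qed
      moreover have "measure (P (th n)) A = 0" using z[of n] emm[of "th n" A] th_in T1sub by auto
      ultimately show False by simp
    qed
    have "AE \<theta> in \<nu>. emeasure (P \<theta>) A = 0" using aeT1 zz by auto
    then have "emeasure mix A = 0"
      using nn_integral_0_iff_AE[OF mf(2)[OF A(1)]] mix_em[OF A(1)] by simp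
    then show "A \<in> null_sets mix" using A mix_sets by auto
  qed
  have mix_ac_Q0: "absolutely_continuous mix Q0" by (rule cc_ac[OF Q0cc])
  show ?thesis
  proof (intro exI[of _ \<Theta>1] conjI ballI allI impI)
    show "\<Theta>1 \<in> sets \<nu>" by (rule T1sets)
    show "emeasure \<nu> \<Theta>1 = 1" by (rule T1_1)
    fix \<theta> assume th: "\<theta> \<in> \<Theta>1"
    show "absolutely_continuous (mixture M P \<nu>) (P \<theta>)"
      unfolding absolutely_continuous_def mix_def[symmetric]
    proof
      fix A assume "A \<in> null_sets mix"
      then have A: "A \<in> sets M" "emeasure mix A = 0" using mix_sets by auto
      then show "A \<in> null_sets (P \<theta>)" using ac[OF th A] Psets th T1sub by auto
    qed
  next
    fix \<rho> \<alpha> X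
    show "(SUP Q\<in>ccomb M P \<Theta>1. rho_hat M \<alpha> Q X) = rho_hat M \<alpha> (mixture M P \<nu>) X"
      unfolding mix_def[symmetric]
    proof (rule antisym)
      show "(SUP Q\<in>ccomb M P \<Theta>1. rho_hat M \<alpha> Q X) \<le> rho_hat M \<alpha> mix X"
        by (rule SUP_least) (rule rho_hat_mono[OF cc_ac])
      show "rho_hat M \<alpha> mix X \<le> (SUP Q\<in>ccomb M P \<Theta>1. rho_hat M \<alpha> Q X)"
        by (rule SUP_upper2[OF Q0cc]) (rule rho_hat_mono[OF Q0_ac])
    qed
    show "(SUP Q\<in>ccomb M P \<Theta>1. rho_P M \<rho> Q X) = rho_P M \<rho> (mixture M P \<nu>) X"
      unfolding mix_def[symmetric]
    proof (rule antisym)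
      show "(SUP Q\<in>ccomb M P \<Theta>1. rho_P M \<rho> Q X) \<le> rho_P M \<rho> mix X"
        by (rule SUP_least) (rule rho_P_mono[OF _ cc_ac], auto simp: ccomb_def mix_sets)
      show "rho_P M \<rho> mix X \<le> (SUP Q\<in>ccomb M P \<Theta>1. rho_P M \<rho> Q X)"
        by (rule SUP_upper2[OF Q0cc]) (rule rho_P_mono[OF _ Q0_ac], simp add: Q0sets mix_sets)
    qed
  qed
qed

end
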